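(* Let $d,K,n$ be positive integers with $K\ge 2$. For $\tau>0$ let $$F_\tau(\mathbf W,\mathbf H)=\frac{1}{nK}\sum_{k=1}^{K}\sum_{i=1}^{n}\mathcal L_{\mathrm{CE}}(\mathbf W^\top \mathbf h_{k,i},\mathbf y_k,\tau),$$ and let $\mathcal S_\tau=\operatorname{argmin}\{F_\tau(\mathbf W,\mathbf H):\mathbf W\in\mathrm{OB}(d,K),\ \mathbf H\in \mathrm{OB}(d,nK)\}$. Then $$\limsup_{\tau\to 0}\mathcal S_\tau\ \subseteq\ \operatorname{argmin}_{\mathbf W\in\mathrm{OB}(d,K),\ \mathbf H\in\mathrm{OB}(d,nK)}\mathcal L_{\mathrm{HardMax}}(\mathbf W,\mathbf H).$$
   Context: $\mathrm{OB}(d,m)$ denotes the set of real $d\times m$ matrices all of whose columns have unit Euclidean norm. A matrix $\mathbf W\in\mathrm{OB}(d,K)$ has columns $\mathbf w_1,\dots,\mathbf w_K$; a matrix $\mathbf H\in\mathrm{OB}(d,nK)$ has columns indexed as $\mathbf h_{k,i}$, $k\in[K]$, $i\in[n]$. $\mathbf y_k\in\mathbb R^K$ is the $k$-th standard basis vector. For $\mathbf z\in\mathbb R^K$, $\mathcal L_{\mathrm{CE}}(\mathbf z,\mathbf y_k,\tau)=-\log\big(\exp(z_k/\tau)/\sum_{j=1}^K\exp(z_j/\tau)\big)$. The HardMax loss is $\mathcal L_{\mathrm{HardMax}}(\mathbf W,\mathbf H)=\max_{k\in[K]}\max_{i\in[n]}\max_{k'\ne k}\langle \mathbf w_{k'}-\mathbf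 w_k,\mathbf h_{k,i}\rangle$. The $\limsup$ of sets as $\tau\to0$ is the (Painlevé–Kuratowski) outer limit: the set of all limit points of sequences $x_j\in\mathcal S_{\tau_j}$ with $\tau_j\to 0$. *)

theory Defs
  imports "HOL-Analysis.Analysis"
begin

text \<open>Dimension d is the finite type 'd (vectors in real ^ 'd); the K classes are the
finite type 'k and the n samples per class are the finite type 'n.
W is given by its columns w_k = W k; H by its columns h_{k,i} = H k i.\<close>

definition OB :: "('a \<Rightarrow> real ^ 'd) set" where
  "OB = {W. \<forall>k. norm (W k) = 1}"

definition CE :: "('k::finite \<Rightarrow> real) \<Rightarrow> 'k \<Rightarrow> real \<Rightarrow> real" where
  "CE z k \<tau> = - ln (exp (z k / \<tau>) / (\<Sum>j\<in>UNIV. exp (z j / \<tau>)))"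

definition F_tau :: "real \<Rightarrow> ('k::finite \<Rightarrow> real ^ 'd) \<Rightarrow> ('k \<Rightarrow> 'n::finite \<Rightarrow> real ^ 'd) \<Rightarrow> real" where
  "F_tau \<tau> W H = (1 / (real CARD('n) * real CARD('k))) *
     (\<Sum>k\<in>UNIV. \<Sum>i\<in>UNIV. CE (\<lambda>j. W j \<bullet> H k i) k \<tau>)"

definition S_tau :: "real \<Rightarrow> (('k::finite \<Rightarrow> real ^ 'd) \<times> ('k \<Rightarrow> 'n::finite \<Rightarrow> real ^ 'd)) set" where
  "S_tau \<tau> = {(W, H). W \<in> OB \<and> (\<forall>k. H k \<in> OB) \<and>
      (\<forall>(W' :: 'k \<Rightarrow> real ^ 'd) (H' :: 'k \<Rightarrow> 'n \<Rightarrow> real ^ 'd). W' \<in> OB \<and> (\<forall>k. H' k \<in> OB) \<longrightarrow> F_tau \<tau> W H \<le> F_tau \<tau> W' H')}"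

definition HardMax :: "('k::finite \<Rightarrow> real ^ 'd) \<Rightarrow> ('k \<Rightarrow> 'n::finite \<Rightarrow> real ^ 'd) \<Rightarrow> real" where
  "HardMax W H = Max {(W k' - W k) \<bullet> H k i | k i k'. k' \<noteq> k}"

definition HardMax_argmin :: "(('k::finite \<Rightarrow> real ^ 'd) \<times> ('k \<Rightarrow> 'n::finite \<Rightarrow> real ^ 'd)) set" where
  "HardMax_argmin = {(W, H). W \<in> OB \<and> (\<forall>k. H k \<in> OB) \<and>
      (\<forall>(W' :: 'k \<Rightarrow> real ^ 'd) (H' :: 'k \<Rightarrow> 'n \<Rightarrow> real ^ 'd). W' \<in> OB \<and> (\<forall>k. H' k \<in> OB) \<longrightarrow> HardMax W H \<le> HardMax W' H')}"

text \<open>Painleve-Kuratowski outer limit as tau tends to 0 (from above).\<close>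
definition outer_limit_0 :: "(real \<Rightarrow> 'a::topological_space set) \<Rightarrow> 'a set" where
  "outer_limit_0 S = {x. \<exists>t xs. (\<forall>j. t j > 0) \<and> t \<longlonglongrightarrow> 0 \<and>
      (\<forall>j. xs j \<in> S (t j)) \<and> xs \<longlonglongrightarrow> x}"

end

theory Submission
  imports Defs "HOL-Real_Asymp.Real_Asymp"
begin

lemma tendsto_apply_fun: "(f \<longlongrightarrow> l) F \<Longrightarrow> ((\<lambda>x. f x i) \<longlongrightarrow> (l i :: 'b::topological_space)) F"
  using continuous_on_tendsto_compose[OF continuous_on_product_coordinates, of f l F i]
  by (simp add: o_def)

lemma analytic_neg: fixes c L e M :: real assumes "c > 0" "e > 0" "L \<ge> 0" "M < 0" "M + e < 0"
  shows "eventually (\<lambda>t. ln (1 + L * exp (M / t)) < c * ln (1 + exp ((M + e) / t))) (at_right 0)"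
proof -
  define N where "N = M + e"
  have N: "N < 0" using assms N_def by simp
  have e1: "eventually (\<lambda>t. exp (N / t) \<le> 1/2) (at_right 0)" using N by real_asymp
  have e2: "eventually (\<lambda>t. L < c/2 * exp (e / t)) (at_right 0)" using assms by real_asymp
  have e3: "eventually (\<lambda>t. t > 0) (at_right (0::real))" by (simp add: eventually_at_right_less)
  show ?thesis using e1 e2 e3
  proof eventually_elim
    case (elim t)
    define u where "u = exp (N / t)"
    have u: "0 < u" "u \<le> 1/2" using elim u_def by auto
    have eu: "exp (e / t) * exp (M / t) = u" unfolding u_def N_def
      by (simp add: exp_add[symmetric] add_divide_distrib)
    have "ln (1 + L * exp (M / t)) \<le> L * exp (M / t)"
      using assms by (intro ln_add_one_self_le_self) simp
    also have "\<dots> < c/2 * exp (e / t) * exp (M / t)"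
      using elim by (intro mult_strict_right_mono) auto
    also have "\<dots> = c/2 * u" using eu by simp
    also have "\<dots> \<le> c * (u - u^2)"
    proof -
      have "u^2 \<le> u/2" using u by (simp add: power2_eq_square mult_left_mono)
      then have "0 \<le> c * (u/2 - u^2)" using assms by (intro mult_nonneg_nonneg) auto
      then show ?thesis by (simp add: algebra_simps)
    qed
    also have "\<dots> \<le> c * ln (1 + u)"
      using u assms by (intro mult_left_mono ln_one_plus_pos_lower_bound) auto
    finally show ?case by (simp add: u_def N_def)
  qed
qed

lemma analytic_zero: fixes c L e :: real assumes "c > 0" "e > 0" "L \<ge> 0"
  shows "eventually (\<lambda>t. ln (1 + L * exp (0 / t)) < c * ln (1 + exp ((0 + e) / t))) (at_right 0)"
  using assms by real_asymp

lemma analytic: fixes c L e M :: real assumes "c > 0" "e > 0" "L \<ge> 0" "M \<le> 0" "M < 0 \<longrightarrow> M + e < 0"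
  shows "eventually (\<lambda>t. ln (1 + L * exp (M / t)) < c * ln (1 + exp ((M + e) / t))) (at_right 0)"
proof (cases "M = 0")
  case True
  then show ?thesis using analytic_zero[OF assms(1-3)] by simp
next
  case False
  then show ?thesis using analytic_neg[OF assms(1-3)] assms(4,5) by simp
qed

lemma CE_eq: "CE z k t = ln (\<Sum>j\<in>UNIV. exp ((z j - z k) / t))"
proof -
  define S where "S = (\<Sum>j\<in>UNIV. exp (z j / t))"
  have S: "S > 0" unfolding S_def by (intro sum_pos) auto
  have "CE z k t = - ln (exp (z k / t) / S)" unfolding CE_def S_def by simp
  also have "\<dots> = ln S - z k / t" using S by (simp add: ln_div)
  also have "\<dots> = ln (S / exp (z k / t))" using S by (simp add: ln_div)
  also have "S / exp (z k / t) = (\<Sum>j\<in>UNIV. exp ((z j - z k) / t))"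
    unfolding S_def sum_divide_distrib by (simp add: exp_diff[symmetric] diff_divide_distrib)
  finally show ?thesis .
qed

lemma sum_split_k: fixes z :: "'k::finite \<Rightarrow> real" and t :: real shows "(\<Sum>j\<in>UNIV. exp ((z j - z k) / t)) = 1 + (\<Sum>j\<in>UNIV-{k}. exp ((z j - z (k::'k::finite)) / t))"
  by (subst sum.remove[of UNIV k]) auto

lemma CE_lower:
  fixes z :: "'k::finite \<Rightarrow> real"
  assumes "k' \<noteq> k"
  shows "ln (1 + exp ((z k' - z k) / t)) \<le> CE z k t"
proof -
  have "exp ((z k' - z k) / t) \<le> (\<Sum>j\<in>UNIV-{k}. exp ((z j - z k) / t))"
    using assms by (intro member_le_sum) auto
  moreover have "0 \<le> (\<Sum>j\<in>UNIV-{k}. exp ((z j - z k) / t))" by (intro sum_nonneg) auto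
  ultimately show ?thesis unfolding CE_eq sum_split_k
    by (subst ln_le_cancel_iff) (auto intro: add_pos_pos add_pos_nonneg)
qed

lemma CE_nonneg:
  fixes z :: "'k::finite \<Rightarrow> real"
  shows "0 \<le> CE z k t"
proof -
  have "0 \<le> (\<Sum>j\<in>UNIV-{k}. exp ((z j - z k) / t))" by (intro sum_nonneg) auto
  then show ?thesis unfolding CE_eq sum_split_k by simp
qed

lemma CE_upper:
  fixes z :: "'k::finite \<Rightarrow> real"
  assumes t: "t > 0" and b: "\<And>j. j \<noteq> k \<Longrightarrow> z j - z k \<le> M"
  shows "CE z k t \<le> ln (1 + (real CARD('k) - 1) * exp (M / t))"
proof -
  have "(\<Sum>j\<in>UNIV-{k}. exp ((z j - z k) / t)) \<le> (\<Sum>j\<in>UNIV-{k}. exp (M / t))"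
    using b t by (intro sum_mono) (auto simp: divide_right_mono)
  also have "\<dots> = (real CARD('k) - 1) * exp (M / t)"
  proof -
    have "card (UNIV - {k}) = CARD('k) - 1" by (simp add: card_Diff_singleton)
    moreover have "CARD('k) \<ge> 1" by (simp add: Suc_leI)
    ultimately show ?thesis by (simp add: of_nat_diff)
  qed
  finally have "(\<Sum>j\<in>UNIV-{k}. exp ((z j - z k) / t)) \<le> (real CARD('k) - 1) * exp (M / t)" .
  moreover have "0 \<le> (\<Sum>j\<in>UNIV-{k}. exp ((z j - z k) / t))" by (intro sum_nonneg) auto
  ultimately show ?thesis unfolding CE_eq sum_split_k
    by (subst ln_le_cancel_iff) (auto intro!: add_pos_nonneg mult_nonneg_nonneg simp: Suc_leI)
qed

lemma F_lower:
  fixes W :: "'k::finite \<Rightarrow> real ^ 'd" and H :: "'k \<Rightarrow> 'n::finite \<Rightarrow> real ^ 'd"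
  assumes "k1 \<noteq> k0"
  shows "(1 / (real CARD('n) * real CARD('k))) * ln (1 + exp (((W k1 - W k0) \<bullet> H k0 i0) / t))
     \<le> F_tau t W H"
proof -
  have "ln (1 + exp (((W k1 - W k0) \<bullet> H k0 i0) / t)) \<le> CE (\<lambda>j. W j \<bullet> H k0 i0) k0 t"
    using CE_lower[OF assms, of "\<lambda>j. W j \<bullet> H k0 i0" t] by (simp add: inner_diff_left)
  also have "\<dots> \<le> (\<Sum>i\<in>UNIV. CE (\<lambda>j. W j \<bullet> H k0 i) k0 t)"
    by (rule member_le_sum[of i0 UNIV "\<lambda>i. CE (\<lambda>j. W j \<bullet> H k0 i) k0 t"]) (auto simp: CE_nonneg)
  also have "\<dots> \<le> (\<Sum>k\<in>UNIV. \<Sum>i\<in>UNIV. CE (\<lambda>j. W j \<bullet> H k i) k t)"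
    by (rule member_le_sum[of k0 UNIV "\<lambda>k. \<Sum>i\<in>UNIV. CE (\<lambda>j. W j \<bullet> H k i) k t"])
       (auto simp: CE_nonneg sum_nonneg)
  finally show ?thesis unfolding F_tau_def by (intro mult_left_mono) auto
qed

lemma F_upper:
  fixes W :: "'k::finite \<Rightarrow> real ^ 'd" and H :: "'k \<Rightarrow> 'n::finite \<Rightarrow> real ^ 'd"
  assumes t: "t > 0" and b: "\<forall>k i k'. k' \<noteq> k \<longrightarrow> (W k' - W k) \<bullet> H k i \<le> M"
  shows "F_tau t W H \<le> ln (1 + (real CARD('k) - 1) * exp (M / t))"
proof -
  define B where "B = ln (1 + (real CARD('k) - 1) * exp (M / t))"
  have "(\<Sum>k\<in>UNIV. \<Sum>i\<in>UNIV. CE (\<lambda>j. W j \<bullet> H k i) k t) \<le> (\<Sum>k\<in>(UNIV::'k set). \<Sum>i\<in>(UNIV::'n set). B)"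
    unfolding B_def
    by (intro sum_mono CE_upper t) (use b in \<open>auto simp: inner_diff_left\<close>)
  also have "\<dots> = real CARD('n) * real CARD('k) * B" by simp
  finally show ?thesis unfolding F_tau_def B_def
    by (simp add: field_simps)
qed

lemma limit_parts:
  fixes W :: "'k::finite \<Rightarrow> real ^ 'd" and H :: "'k \<Rightarrow> 'n::finite \<Rightarrow> real ^ 'd"
  assumes "(W, H) \<in> outer_limit_0 S_tau"
  obtains t xs where "\<forall>j. t j > 0" "t \<longlonglongrightarrow> 0" "\<forall>j. xs j \<in> S_tau (t j)"
    "\<And>k. (\<lambda>j. fst (xs j) k) \<longlonglongrightarrow> W k" "\<And>k i. (\<lambda>j. snd (xs j) k i) \<longlonglongrightarrow> H k i"
proof -
  from assms obtain t xs where t: "\<forall>j. t j > 0" "t \<longlonglongrightarrow> 0" and xs: "\<forall>j. xs j \<in> S_tau (t j)"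
    "xs \<longlonglongrightarrow> (W, H)"
    unfolding outer_limit_0_def by blast
  have f: "(\<lambda>j. fst (xs j)) \<longlonglongrightarrow> W" using tendsto_fst[OF xs(2)] by simp
  have s: "(\<lambda>j. snd (xs j)) \<longlonglongrightarrow> H" using tendsto_snd[OF xs(2)] by simp
  show ?thesis
    apply (rule that[OF t xs(1)])
    using tendsto_apply_fun[OF f] apply simp
    using tendsto_apply_fun[OF tendsto_apply_fun[OF s]] apply simp
    done
qed

lemma norm_limit_1:
  fixes v :: "nat \<Rightarrow> real ^ 'd"
  assumes "\<forall>j. norm (v j) = 1" "v \<longlonglongrightarrow> w"
  shows "norm w = 1"
proof -
  have "(\<lambda>j. norm (v j)) \<longlonglongrightarrow> norm w" using assms(2) by (rule tendsto_norm)
  moreover have "(\<lambda>j. norm (v j)) \<longlonglongrightarrow> 1" using assms(1) by simp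
  ultimately show ?thesis using LIMSEQ_unique by blast
qed

lemma limit_OB:
  fixes W :: "'k::finite \<Rightarrow> real ^ 'd" and H :: "'k \<Rightarrow> 'n::finite \<Rightarrow> real ^ 'd"
  assumes "(W, H) \<in> outer_limit_0 S_tau"
  shows "W \<in> OB" "\<forall>k. H k \<in> OB"
proof -
  obtain t xs where t: "\<forall>j. t j > 0" "t \<longlonglongrightarrow> 0" and xs: "\<forall>j. xs j \<in> S_tau (t j)"
    and fW: "\<And>k. (\<lambda>j. fst (xs j) k) \<longlonglongrightarrow> W k" and fH: "\<And>k i. (\<lambda>j. snd (xs j) k i) \<longlonglongrightarrow> H k i"
    using limit_parts[OF assms] by blast
  have ob: "fst (xs j) \<in> OB" "snd (xs j) k \<in> OB" for j k
    using xs[rule_format, of j] unfolding S_tau_def by (auto simp: case_prod_beta)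
  have "norm (W k) = 1" for k
    by (rule norm_limit_1[OF _ fW]) (use ob in \<open>auto simp: OB_def\<close>)
  then show "W \<in> OB" unfolding OB_def by auto
  have "norm (H k i) = 1" for k i
    by (rule norm_limit_1[OF _ fH]) (use ob in \<open>auto simp: OB_def\<close>)
  then show "\<forall>k. H k \<in> OB" unfolding OB_def by auto
qed

lemma key:
  fixes W W' :: "'k::finite \<Rightarrow> real ^ 'd" and H H' :: "'k \<Rightarrow> 'n::finite \<Rightarrow> real ^ 'd"
  assumes lim: "(W, H) \<in> outer_limit_0 S_tau"
    and W'OB: "W' \<in> OB" "\<forall>k. H' k \<in> OB" and M: "M \<le> 0"
    and bnd: "\<forall>k i k'. k' \<noteq> k \<longrightarrow> (W' k' - W' k) \<bullet> H' k i \<le> M"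
    and kk: "k1 \<noteq> k0"
  shows "(W k1 - W k0) \<bullet> H k0 i0 \<le> M"
proof (rule ccontr)
  define m where "m = (W k1 - W k0) \<bullet> H k0 i0"
  assume "\<not> (W k1 - W k0) \<bullet> H k0 i0 \<le> M"
  then have mM: "m > M" unfolding m_def by simp
  obtain t xs where t: "\<forall>j. t j > 0" "t \<longlonglongrightarrow> 0" and xs: "\<forall>j. xs j \<in> S_tau (t j)"
    and fW: "\<And>k. (\<lambda>j. fst (xs j) k) \<longlonglongrightarrow> W k" and fH: "\<And>k i. (\<lambda>j. snd (xs j) k i) \<longlonglongrightarrow> H k i"
    using limit_parts[OF lim] by blast
  define T where "T j = (fst (xs j) k1 - fst (xs j) k0) \<bullet> snd (xs j) k0 i0" for j
  have Tlim: "T \<longlonglongrightarrow> m" unfolding T_def m_def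
    by (intro tendsto_inner tendsto_diff fW fH)
  define e where "e = (if M = 0 then (m - M) / 2 else min ((m - M) / 2) (- M / 2))"
  have e0: "e > 0 \<and> M + e < m \<and> (M < 0 \<longrightarrow> M + e < 0)"
  proof (cases "M = 0")
    case True
    then show ?thesis using mM unfolding e_def by simp
  next
    case False
    then have "e = min ((m - M) / 2) (- M / 2)" unfolding e_def by simp
    then show ?thesis using mM M False by (auto simp: min_def field_simps)
  qed
  have e: "e > 0" "M + e < m" "M < 0 \<longrightarrow> M + e < 0" using e0 by auto
  define c where "c = 1 / (real CARD('n) * real CARD('k))"
  define L where "L = real CARD('k) - 1"
  have c: "c > 0" unfolding c_def by simp
  have L: "L \<ge> 0" unfolding L_def by (simp add: Suc_leI)
  have ev1: "eventually (\<lambda>j. T j > M + e) sequentially"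
    using order_tendstoD(1)[OF Tlim e(2)] .
  have tf: "filterlim t (at_right 0) sequentially"
    using t by (auto simp: filterlim_at intro!: always_eventually) (metis less_irrefl)
  have ev2: "eventually (\<lambda>j. ln (1 + L * exp (M / t j)) < c * ln (1 + exp ((M + e) / t j))) sequentially"
    using filterlim_iff[THEN iffD1, OF tf, rule_format, OF analytic[OF c e(1) L M e(3)]] .
  have "eventually (\<lambda>j. False) sequentially"
    using ev1 ev2
  proof eventually_elim
    case (elim j)
    have tj: "t j > 0" using t by auto
    obtain Wj Hj where xj: "xs j = (Wj, Hj)" by (cases "xs j")
    have opt: "F_tau (t j) Wj Hj \<le> F_tau (t j) W' H'"
      using xs[rule_format, of j] W'OB unfolding xj S_tau_def by auto
    have Tj: "T j = (Wj k1 - Wj k0) \<bullet> Hj k0 i0" unfolding T_def xj by simp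
    have "c * ln (1 + exp ((M + e) / t j)) \<le> c * ln (1 + exp (T j / t j))"
    proof -
      have "(M + e) / t j \<le> T j / t j" using elim tj by (intro divide_right_mono) auto
      then have "exp ((M + e) / t j) \<le> exp (T j / t j)" by simp
      then have "ln (1 + exp ((M + e) / t j)) \<le> ln (1 + exp (T j / t j))"
        by (subst ln_le_cancel_iff) (auto intro: add_pos_pos)
      then show ?thesis using c by (intro mult_left_mono) auto
    qed
    also have "\<dots> \<le> F_tau (t j) Wj Hj" unfolding Tj c_def by (rule F_lower[OF kk])
    also have "\<dots> \<le> F_tau (t j) W' H'" by (rule opt)
    also have "\<dots> \<le> ln (1 + L * exp (M / t j))" unfolding L_def by (rule F_upper[OF tj bnd])
    finally show ?case using elim by simp
  qed
  then show False by simp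
qed

lemma HardMax_finite:
  fixes W :: "'k::finite \<Rightarrow> real ^ 'd" and H :: "'k \<Rightarrow> 'n::finite \<Rightarrow> real ^ 'd"
  shows "finite {(W k' - W k) \<bullet> H k i | k i k'. k' \<noteq> k}"
proof -
  have "{(W k' - W k) \<bullet> H k i | k i k'. k' \<noteq> k} \<subseteq> (\<lambda>(k, i, k'). (W k' - W k) \<bullet> H k i) ` UNIV"
  proof
    fix v assume "v \<in> {(W k' - W k) \<bullet> H k i | k i k'. k' \<noteq> k}"
    then obtain k i k' where "v = (W k' - W k) \<bullet> H k i" by blast
    then show "v \<in> (\<lambda>(k, i, k'). (W k' - W k) \<bullet> H k i) ` UNIV"
      by (auto intro: image_eqI[of _ _ "(k, i, k')"])
  qed
  then show ?thesis by (rule finite_subset) simp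
qed

theorem mainTheorem1:
  assumes "CARD('k::finite) \<ge> 2"
  shows "outer_limit_0 (S_tau :: real \<Rightarrow> (('k \<Rightarrow> real ^ 'd) \<times> ('k \<Rightarrow> 'n::finite \<Rightarrow> real ^ 'd)) set)
           \<subseteq> HardMax_argmin"
proof
  fix x :: "('k \<Rightarrow> real ^ 'd) \<times> ('k \<Rightarrow> 'n \<Rightarrow> real ^ 'd)"
  assume x: "x \<in> outer_limit_0 S_tau"
  obtain W H where xWH: "x = (W, H)" by (cases x)
  have lim: "(W, H) \<in> outer_limit_0 S_tau" using x xWH by simp
  obtain k0 k1 :: 'k where kk: "k1 \<noteq> k0"
  proof -
    obtain k0 :: 'k where True by simp
    have "card (UNIV - {k0}) \<ge> 1" using assms by (simp add: card_Diff_singleton)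
    then obtain k1 where "k1 \<in> UNIV - {k0}"
      by (metis card.empty ex_in_conv not_one_le_zero)
    then show ?thesis using that by auto
  qed
  have main: "HardMax W H \<le> HardMax W' H'" if W': "W' \<in> OB" "\<forall>k. H' k \<in> OB"
    for W' :: "'k \<Rightarrow> real ^ 'd" and H' :: "'k \<Rightarrow> 'n \<Rightarrow> real ^ 'd"
  proof -
    have ne: "{(W k' - W k) \<bullet> H k i | k i k'. k' \<noteq> k} \<noteq> {}" using kk by blast
    have terms: "(W k' - W k) \<bullet> H k i \<le> HardMax W' H'" if "k' \<noteq> k" for k i k'
    proof (cases "HardMax W' H' \<le> 0")
      case True
      show ?thesis
      proof (rule key[OF lim W' True _ that])
        show "\<forall>k i k'. k' \<noteq> k \<longrightarrow> (W' k' - W' k) \<bullet> H' k i \<le> HardMax W' H'"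
          unfolding HardMax_def by (auto intro!: Max_ge HardMax_finite)
      qed
    next
      case False
      obtain a :: 'd where True by simp
      define W0 where "W0 = (\<lambda>k::'k. axis a (1::real))"
      define H0 where "H0 = (\<lambda>(k::'k) (i::'n). axis a (1::real))"
      have "(W k' - W k) \<bullet> H k i \<le> 0"
        by (rule key[OF lim, of W0 H0]) (auto simp: W0_def H0_def OB_def that)
      then show ?thesis using False by simp
    qed
    show ?thesis unfolding HardMax_def
      by (subst Max_le_iff[OF HardMax_finite ne]) (auto intro: terms[unfolded HardMax_def])
  qed
  show "x \<in> HardMax_argmin"
    unfolding xWH HardMax_argmin_def using limit_OB[OF lim] main by auto
qed

end
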